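(* Let $G$ be a finite two-player zero-sum extensive form game with perfect recall (players $1,2$, possibly with chance). Let $t\ge 1$ and let $\boldsymbol{\sigma}^0=(\sigma^0_1,\sigma^0_2),\dots,\boldsymbol{\sigma}^t=(\sigma^t_1,\sigma^t_2)$ be any sequence of strategy profiles. Define the alternating-update average regrets $$r^t_1:=\max_{\sigma^*_1}\frac{1}{t}\sum_{i=0}^{t-1}\Bigl(u_1^{(\sigma^*_1,\sigma^i_2)}-u_1^{(\sigma^i_1,\sigma^i_2)}\Bigr),\qquad r^t_2:=\max_{\sigma^*_2}\frac{1}{t}\sum_{i=0}^{t-1}\Bigl(u_2^{(\sigma^{i+1}_1,\sigma^*_2)}-u_2^{(\sigma^{i+1}_1,\sigma^i_2)}\Bigr).$$ If $r^t_1\le\epsilon_1$ and $r^t_2\le\epsilon_2$, then $$\mathrm{expl}\bigl(\bar{\sigma}^{[1,t]}_1,\bar{\sigma}^{[0,t-1]}_2\bigr)\le \epsilon_1+\epsilon_2-\frac{1}{t}\sum_{i=0}^{t-1}\Bigl(u_1^{(\sigma^{i+1}_1,\sigma^i_2)}-u_1^{(\sigma^i_1,\sigma^i_2)}\Bigr).$$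
   Context: A strategy $\sigma_p$ of player $p$ assigns to each information set $I$ of player $p$ a probability distribution over the legal actions $A(I)$. $u_p^{\boldsymbol{\sigma}}$ denotes the expected utility of player $p$ under profile $\boldsymbol{\sigma}$ (chance acting according to its fixed probabilities); zero-sum means $u_1(z)+u_2(z)=0$ at every terminal history $z$. The maxima range over all strategies of the respective player. For strategies $\sigma^a_p,\dots,\sigma^b_p$, the average strategy $\bar{\sigma}^{[a,b]}_p$ is the strategy of player $p$ whose reach (realization) probabilities $\pi_p$ of every history are the uniform average of those of $\sigma^a_p,\dots,\sigma^b_p$ (equivalently, the uniform mixture of these strategies), so that $u^{(\bar\sigma^{[a,b]}_p,\sigma_{-p})}_q=\frac{1}{b-a+1}\sum_{i=a}^b u^{(\sigma^i_p,\sigma_{-p})}_q$ for any opponent strategy. The exploitability of a profile is $\mathrm{expl}(\sigma_1,\sigma_2):=\max_{\sigma^*_1}u_1^{(\sigma^*_1,\sigma_2)}-u_1^{(\sigma_1,\sigma_2)}+\max_{\sigma^*_2}u_2^{(\sigma_1,\sigma^*_2)}-u_2^{(\sigma_1,\sigma_2)}$, which by zero-sum equals $\max_{\sigma^*_1}u_1^{(\sigma^*_1,\sigma_2)}+\max_{\sigma^*_2}u_2^{(\sigma_1,\sigma^*_2)}$. *)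

theory Defs
  imports Main "HOL.Real"
begin

text \<open>Histories are lists of actions;
  the game is given by its (finite, prefix-closed) set of histories, the player to move
  at each history, chance probabilities, information-set labels and the utility of
  player 1 at terminal histories (player 2 gets the negation: zero-sum).\<close>

datatype player = P1 | P2 | Chance

record ('a, 'i) efg =
  hists  :: "'a list set"
  turn   :: "'a list \<Rightarrow> player"
  chance :: "'a list \<Rightarrow> 'a \<Rightarrow> real"
  info   :: "'a list \<Rightarrow> 'i"
  util1  :: "'a list \<Rightarrow> real"

definition acts :: "('a, 'i) efg \<Rightarrow> 'a list \<Rightarrow> 'a set" where
  "acts G h = {a. h @ [a] \<in> hists G}"

definition terminals :: "('a, 'i) efg \<Rightarrow> 'a list set" where
  "terminals G = {h \<in> hists G. acts G h = {}}"

definition nonterminals :: "('a, 'i) efg \<Rightarrow> 'a list set" where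
  "nonterminals G = {h \<in> hists G. acts G h \<noteq> {}}"

definition util :: "('a, 'i) efg \<Rightarrow> player \<Rightarrow> 'a list \<Rightarrow> real" where
  "util G p z = (if p = P1 then util1 G z else - util1 G z)"

definition own_seq :: "('a, 'i) efg \<Rightarrow> player \<Rightarrow> 'a list \<Rightarrow> ('i \<times> 'a) list" where
  "own_seq G p h = map (\<lambda>k. (info G (take k h), h ! k))
                      (filter (\<lambda>k. turn G (take k h) = p) [0..<length h])"

definition zs_efg_perfect_recall :: "('a, 'i) efg \<Rightarrow> bool" where
  "zs_efg_perfect_recall G \<longleftrightarrow>
     finite (hists G) \<and> [] \<in> hists G \<and>
     (\<forall>h a. h @ [a] \<in> hists G \<longrightarrow> h \<in> hists G) \<and>
     (\<forall>h \<in> nonterminals G. turn G h = Chance \<longrightarrow>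
         (\<forall>a \<in> acts G h. chance G h a \<ge> 0) \<and> (\<Sum>a \<in> acts G h. chance G h a) = 1) \<and>
     (\<forall>h \<in> nonterminals G. \<forall>h' \<in> nonterminals G.
         turn G h \<noteq> Chance \<longrightarrow> turn G h' \<noteq> Chance \<longrightarrow> info G h = info G h' \<longrightarrow>
           turn G h = turn G h' \<and> acts G h = acts G h' \<and>
           own_seq G (turn G h) h = own_seq G (turn G h) h')"

definition strategy :: "('a, 'i) efg \<Rightarrow> player \<Rightarrow> ('i \<Rightarrow> 'a \<Rightarrow> real) \<Rightarrow> bool" where
  "strategy G p s \<longleftrightarrow>
     (\<forall>h \<in> nonterminals G. turn G h = p \<longrightarrow>
        (\<forall>a \<in> acts G h. s (info G h) a \<ge> 0) \<and> (\<Sum>a \<in> acts G h. s (info G h) a) = 1)"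

definition strategies :: "('a, 'i) efg \<Rightarrow> player \<Rightarrow> ('i \<Rightarrow> 'a \<Rightarrow> real) set" where
  "strategies G p = {s. strategy G p s}"

definition reach :: "('a, 'i) efg \<Rightarrow> player \<Rightarrow> ('i \<Rightarrow> 'a \<Rightarrow> real) \<Rightarrow> 'a list \<Rightarrow> real" where
  "reach G p s h = (\<Prod>k \<in> {k. k < length h \<and> turn G (take k h) = p}.
                       s (info G (take k h)) (h ! k))"

definition chance_reach :: "('a, 'i) efg \<Rightarrow> 'a list \<Rightarrow> real" where
  "chance_reach G h = (\<Prod>k \<in> {k. k < length h \<and> turn G (take k h) = Chance}.
                         chance G (take k h) (h ! k))"

definition EU :: "('a, 'i) efg \<Rightarrow> player \<Rightarrow> ('i \<Rightarrow> 'a \<Rightarrow> real) \<Rightarrow> ('i \<Rightarrow> 'a \<Rightarrow> real) \<Rightarrow> real" where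
  "EU G p s1 s2 = (\<Sum>z \<in> terminals G.
                     reach G P1 s1 z * reach G P2 s2 z * chance_reach G z * util G p z)"

definition avg_strategy :: "('a, 'i) efg \<Rightarrow> player \<Rightarrow> ('i \<Rightarrow> 'a \<Rightarrow> real)
                            \<Rightarrow> (nat \<Rightarrow> 'i \<Rightarrow> 'a \<Rightarrow> real) \<Rightarrow> nat \<Rightarrow> nat \<Rightarrow> bool" where
  "avg_strategy G p sb S a b \<longleftrightarrow> strategy G p sb \<and>
     (\<forall>h \<in> hists G. reach G p sb h = (\<Sum>i = a..b. reach G p (S i) h) / real (b - a + 1))"

definition expl :: "('a, 'i) efg \<Rightarrow> ('i \<Rightarrow> 'a \<Rightarrow> real) \<Rightarrow> ('i \<Rightarrow> 'a \<Rightarrow> real) \<Rightarrow> real" where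
  "expl G s1 s2 =
     (SUP s \<in> strategies G P1. EU G P1 s s2) - EU G P1 s1 s2
   + ((SUP s \<in> strategies G P2. EU G P2 s1 s) - EU G P2 s1 s2)"

end

theory Submission
  imports Defs
begin

lemma prefix_hists:
  assumes pc: "\<forall>h a. h @ [a] \<in> hists G \<longrightarrow> h \<in> hists G"
  shows "z \<in> hists G \<Longrightarrow> take k z \<in> hists G"
proof (induction z arbitrary: k rule: rev_induct)
  case Nil then show ?case by simp
next
  case (snoc a z)
  then have "z \<in> hists G" using pc by blast
  then show ?case using snoc by (cases "k \<le> length z") auto
qed

lemma finite_acts:
  assumes "finite (hists G)" shows "finite (acts G h)"
proof -
  have "(\<lambda>a. h @ [a]) ` acts G h \<subseteq> hists G" by (auto simp: acts_def)
  then have "finite ((\<lambda>a. h @ [a]) ` acts G h)" using assms finite_subset by blast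
  then show ?thesis by (rule finite_imageD) (auto simp: inj_on_def)
qed

lemma reach_bound:
  assumes G: "zs_efg_perfect_recall G" and s: "strategy G p s" and z: "z \<in> hists G"
  shows "0 \<le> reach G p s z \<and> reach G p s z \<le> 1"
proof -
  have pc: "\<forall>h a. h @ [a] \<in> hists G \<longrightarrow> h \<in> hists G" and fin: "finite (hists G)"
    using G by (auto simp: zs_efg_perfect_recall_def)
  have fac: "0 \<le> s (info G (take k z)) (z ! k) \<and> s (info G (take k z)) (z ! k) \<le> 1"
    if k: "k < length z" "turn G (take k z) = p" for k
  proof -
    have "take (Suc k) z = take k z @ [z ! k]" using k by (simp add: take_Suc_conv_app_nth)
    moreover have "take (Suc k) z \<in> hists G" using prefix_hists[OF pc z] .
    ultimately have a: "z ! k \<in> acts G (take k z)" by (simp add: acts_def)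
    have h: "take k z \<in> nonterminals G" using a prefix_hists[OF pc z]
      by (auto simp: nonterminals_def)
    have nn: "\<forall>b\<in>acts G (take k z). 0 \<le> s (info G (take k z)) b"
      and sm: "(\<Sum>b\<in>acts G (take k z). s (info G (take k z)) b) = 1"
      using s h k(2) by (auto simp: strategy_def)
    have "s (info G (take k z)) (z ! k) \<le> (\<Sum>b\<in>acts G (take k z). s (info G (take k z)) b)"
      by (rule member_le_sum) (use a nn finite_acts[OF fin] in auto)
    then show ?thesis using sm nn a by auto
  qed
  show ?thesis unfolding reach_def
    using fac by (auto intro!: prod_nonneg prod_le_1)
qed

definition Kb :: "('a, 'i) efg \<Rightarrow> real" where
  "Kb G = (\<Sum>z\<in>terminals G. \<bar>chance_reach G z * util1 G z\<bar>)"

lemma EU_bound: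
  assumes G: "zs_efg_perfect_recall G" and x: "strategy G P1 x" and y: "strategy G P2 y"
  shows "\<bar>EU G q x y\<bar> \<le> Kb G"
proof -
  have "\<bar>EU G q x y\<bar> \<le> (\<Sum>z\<in>terminals G.
      \<bar>reach G P1 x z * reach G P2 y z * chance_reach G z * util G q z\<bar>)"
    unfolding EU_def by (rule sum_abs)
  also have "\<dots> \<le> Kb G" unfolding Kb_def
  proof (rule sum_mono)
    fix z assume "z \<in> terminals G"
    then have zh: "z \<in> hists G" by (simp add: terminals_def)
    have r1: "\<bar>reach G P1 x z\<bar> \<le> 1" and r2: "\<bar>reach G P2 y z\<bar> \<le> 1"
      using reach_bound[OF G x zh] reach_bound[OF G y zh] by auto
    have "\<bar>reach G P1 x z * reach G P2 y z * chance_reach G z * util G q z\<bar>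
       = \<bar>reach G P1 x z\<bar> * \<bar>reach G P2 y z\<bar> * \<bar>chance_reach G z * util1 G z\<bar>"
      by (simp add: util_def abs_mult)
    also have "\<dots> \<le> 1 * 1 * \<bar>chance_reach G z * util1 G z\<bar>"
      by (intro mult_right_mono mult_mono r1 r2) auto
    finally show "\<bar>reach G P1 x z * reach G P2 y z * chance_reach G z * util G q z\<bar>
       \<le> \<bar>chance_reach G z * util1 G z\<bar>" by simp
  qed
  finally show ?thesis .
qed

lemma EU_P2: "EU G P2 x y = - EU G P1 x y"
  by (simp add: EU_def util_def sum_negf)

lemma sum_shift1: "(\<Sum>i = Suc 0..(t::nat). f i) = (\<Sum>i<t. f (Suc i))"
  by (induction t) (auto simp: atLeastAtMostSuc_conv add.commute)

lemma lin2:
  assumes G: "zs_efg_perfect_recall G" and t: "t \<ge> 1"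
    and av: "avg_strategy G P2 sb2 s2 0 (t - 1)"
  shows "EU G q x sb2 = (1 / real t) * (\<Sum>i<t. EU G q x (s2 i))"
proof -
  have eq: "{0..t-1} = {..<t}" using t by auto
  have r: "reach G P2 sb2 z = (\<Sum>i<t. reach G P2 (s2 i) z) / real t" if "z \<in> terminals G" for z
    using av that t eq by (auto simp: avg_strategy_def terminals_def)
  have "EU G q x sb2 = (\<Sum>z\<in>terminals G. (1 / real t) * (\<Sum>i<t.
        reach G P1 x z * reach G P2 (s2 i) z * chance_reach G z * util G q z))"
    unfolding EU_def
    by (rule sum.cong) (auto simp: r sum_distrib_left sum_distrib_right sum_divide_distrib)
  also have "\<dots> = (1 / real t) * (\<Sum>i<t. EU G q x (s2 i))"
    unfolding EU_def by (simp add: sum_distrib_left[symmetric] sum_divide_distrib[symmetric] sum.swap[of _ "terminals G"])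
  finally show ?thesis .
qed

lemma lin1:
  assumes G: "zs_efg_perfect_recall G" and t: "t \<ge> 1"
    and av: "avg_strategy G P1 sb1 s1 1 t"
  shows "EU G q sb1 y = (1 / real t) * (\<Sum>i<t. EU G q (s1 (Suc i)) y)"
proof -
  have r: "reach G P1 sb1 z = (\<Sum>i<t. reach G P1 (s1 (Suc i)) z) / real t" if "z \<in> terminals G" for z
    using av that t by (auto simp: avg_strategy_def terminals_def sum_shift1)
  have "EU G q sb1 y = (\<Sum>z\<in>terminals G. (1 / real t) * (\<Sum>i<t.
        reach G P1 (s1 (Suc i)) z * reach G P2 y z * chance_reach G z * util G q z))"
    unfolding EU_def
    by (rule sum.cong) (auto simp: r sum_distrib_left sum_distrib_right sum_divide_distrib)
  also have "\<dots> = (1 / real t) * (\<Sum>i<t. EU G q (s1 (Suc i)) y)"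
    unfolding EU_def by (simp add: sum_distrib_left[symmetric] sum_divide_distrib[symmetric] sum.swap[of _ "terminals G"])
  finally show ?thesis .
qed

theorem theorem1:
  fixes G :: "('a, 'i) efg"
    and s1 s2 :: "nat \<Rightarrow> 'i \<Rightarrow> 'a \<Rightarrow> real"
    and sb1 sb2 :: "'i \<Rightarrow> 'a \<Rightarrow> real"
    and t :: nat and e1 e2 :: real
  assumes "zs_efg_perfect_recall G"
    and "t \<ge> 1"
    and "\<forall>i \<le> t. strategy G P1 (s1 i) \<and> strategy G P2 (s2 i)"
    and "avg_strategy G P1 sb1 s1 1 t"
    and "avg_strategy G P2 sb2 s2 0 (t - 1)"
    and "(SUP s \<in> strategies G P1.
           (1 / real t) * (\<Sum>i<t. EU G P1 s (s2 i) - EU G P1 (s1 i) (s2 i))) \<le> e1"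
    and "(SUP s \<in> strategies G P2.
           (1 / real t) * (\<Sum>i<t. EU G P2 (s1 (Suc i)) s - EU G P2 (s1 (Suc i)) (s2 i))) \<le> e2"
  shows "expl G sb1 sb2 \<le> e1 + e2
           - (1 / real t) * (\<Sum>i<t. EU G P1 (s1 (Suc i)) (s2 i) - EU G P1 (s1 i) (s2 i))"
proof -
  note G = assms(1) and t = assms(2) and st = assms(3)
  define C1 where "C1 = (1 / real t) * (\<Sum>i<t. EU G P1 (s1 i) (s2 i))"
  define C2 where "C2 = (1 / real t) * (\<Sum>i<t. EU G P2 (s1 (Suc i)) (s2 i))"
  define f1 where "f1 = (\<lambda>s. (1 / real t) * (\<Sum>i<t. EU G P1 s (s2 i) - EU G P1 (s1 i) (s2 i)))"
  define f2 where "f2 = (\<lambda>s. (1 / real t) * (\<Sum>i<t. EU G P2 (s1 (Suc i)) s - EU G P2 (s1 (Suc i)) (s2 i)))"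
  have tpos: "real t > 0" using t by simp
  have bdd1: "bdd_above (f1 ` strategies G P1)"
  proof (rule bdd_aboveI2)
    fix s assume s: "s \<in> strategies G P1"
    have "(\<Sum>i<t. EU G P1 s (s2 i) - EU G P1 (s1 i) (s2 i)) \<le> (\<Sum>i<t. 2 * Kb G)"
    proof (rule sum_mono)
      fix i assume "i \<in> {..<t}"
      then have "strategy G P1 (s1 i)" "strategy G P2 (s2 i)" using st by auto
      then show "EU G P1 s (s2 i) - EU G P1 (s1 i) (s2 i) \<le> 2 * Kb G"
        using EU_bound[OF G, of s "s2 i" P1] EU_bound[OF G, of "s1 i" "s2 i" P1] s
        by (auto simp: strategies_def)
    qed
    then show "f1 s \<le> 2 * Kb G" using tpos unfolding f1_def by (simp add: field_simps)
  qed
  have bdd2: "bdd_above (f2 ` strategies G P2)"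
  proof (rule bdd_aboveI2)
    fix s assume s: "s \<in> strategies G P2"
    have "(\<Sum>i<t. EU G P2 (s1 (Suc i)) s - EU G P2 (s1 (Suc i)) (s2 i)) \<le> (\<Sum>i<t. 2 * Kb G)"
    proof (rule sum_mono)
      fix i assume "i \<in> {..<t}"
      then have "strategy G P1 (s1 (Suc i))" "strategy G P2 (s2 i)" using st by auto
      then show "EU G P2 (s1 (Suc i)) s - EU G P2 (s1 (Suc i)) (s2 i) \<le> 2 * Kb G"
        using EU_bound[OF G, of "s1 (Suc i)" s P2] EU_bound[OF G, of "s1 (Suc i)" "s2 i" P2] s
        by (auto simp: strategies_def)
    qed
    then show "f2 s \<le> 2 * Kb G" using tpos unfolding f2_def by (simp add: field_simps)
  qed
  have A: "(SUP s \<in> strategies G P1. EU G P1 s sb2) \<le> e1 + C1"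
  proof (rule cSUP_least)
    show "strategies G P1 \<noteq> {}" using st by (auto simp: strategies_def)
  next
    fix s assume s: "s \<in> strategies G P1"
    have "EU G P1 s sb2 = f1 s + C1"
      unfolding lin2[OF G t assms(5)] f1_def C1_def by (simp add: sum_subtractf algebra_simps)
    also have "f1 s \<le> e1" using cSUP_upper[OF s bdd1] assms(6) unfolding f1_def by linarith
    finally show "EU G P1 s sb2 \<le> e1 + C1" by simp
  qed
  have B: "(SUP s \<in> strategies G P2. EU G P2 sb1 s) \<le> e2 + C2"
  proof (rule cSUP_least)
    show "strategies G P2 \<noteq> {}" using st by (auto simp: strategies_def)
  next
    fix s assume s: "s \<in> strategies G P2"
    have "EU G P2 sb1 s = f2 s + C2"
      unfolding lin1[OF G t assms(4)] f2_def C2_def by (simp add: sum_subtractf algebra_simps)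
    also have "f2 s \<le> e2" using cSUP_upper[OF s bdd2] assms(7) unfolding f2_def by linarith
    finally show "EU G P2 sb1 s \<le> e2 + C2" by simp
  qed
  have "expl G sb1 sb2 = (SUP s \<in> strategies G P1. EU G P1 s sb2) + (SUP s \<in> strategies G P2. EU G P2 sb1 s)"
    unfolding expl_def EU_P2[of G sb1 sb2] by simp
  also have "\<dots> \<le> e1 + C1 + (e2 + C2)" using A B by simp
  also have "\<dots> = e1 + e2
           - (1 / real t) * (\<Sum>i<t. EU G P1 (s1 (Suc i)) (s2 i) - EU G P1 (s1 i) (s2 i))"
    unfolding C1_def C2_def EU_P2 by (simp add: sum_subtractf sum_negf algebra_simps)
  finally show ?thesis .
qed

end
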